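(* Let $n$ and $m$ be integers with $n\ge 1$ and $0\le m\le n$, and let $\theta>0$ be real. Then $$S'_{n+1,m+1}(\theta)=\frac{\theta^{m}}{(\theta+1)_n}\,\frac{1}{2\pi i}\int_{\mathcal C_R}\frac{(z+1)_n}{z^{m}}\,\frac{dz}{z-\theta},$$ for every $R>\theta$, where $\mathcal C_R$ is the circle $|z|=R$ in the complex plane, traversed once counterclockwise.
   Context: For a complex number $\alpha$ and an integer $n\ge0$, the Pochhammer symbol is $(\alpha)_0=1$, $(\alpha)_n=\alpha(\alpha+1)\cdots(\alpha+n-1)$. The Stirling numbers of the first kind $S_n^{(k)}$ ($0\le k\le n$) are defined by the polynomial identity $(\theta)_n=\sum_{k=0}^n(-1)^{n-k}S_n^{(k)}\theta^k$. For integers $0\le m\le n$ and real $\theta>0$, define $$S'_{n,m}(\theta)=\frac{1}{(\theta)_n}\sum_{k=m}^n(-1)^{n-k}S_n^{(k)}\theta^k .$$ *)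

theory Defs
  imports "HOL-Complex_Analysis.Complex_Analysis" "HOL-Combinatorics.Stirling"
begin

(* Signed Stirling numbers of the first kind S_n^(k), characterised by
   (theta)_n = sum_k (-1)^(n-k) S_n^(k) theta^k; the library's unsigned
   numbers satisfy (theta)_n = sum_k stirling n k theta^k. *)
definition stirling1_signed :: "nat \<Rightarrow> nat \<Rightarrow> int" where
  "stirling1_signed n k = (-1) ^ (n - k) * int (stirling n k)"

definition S' :: "nat \<Rightarrow> nat \<Rightarrow> real \<Rightarrow> real" where
  "S' n m \<theta> = (1 / pochhammer \<theta> n) *
     (\<Sum>k=m..n. (-1) ^ (n - k) * of_int (stirling1_signed n k) * \<theta> ^ k)"

end

theory Submission imports Defs begin
lemma deriv_pow_const: "(deriv ^^ k) (\<lambda>_. (1::complex)) = (if k = 0 then (\<lambda>_. 1) else (\<lambda>_. 0))"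
  by (induction k) auto

lemma J: assumes "R > 0"
  shows "((\<lambda>u. 1 / u ^ Suc k) has_contour_integral (if k = 0 then 2 * pi * \<i> else 0)) (circlepath 0 R)"
proof -
  have "((\<lambda>u. (\<lambda>_. (1::complex)) u / (u - 0) ^ Suc k) has_contour_integral
     ((2 * pi * \<i>) / (fact k) * (deriv ^^ k) (\<lambda>_. 1) 0)) (circlepath 0 R)"
    by (rule Cauchy_has_contour_integral_higher_derivative_circlepath) (use assms in auto)
  then show ?thesis by (cases k) (auto simp add: deriv_pow_const)
qed

lemma I: assumes "R > 0" "norm \<theta> < R" "\<theta> \<noteq> 0"
  shows "((\<lambda>u. 1 / (u ^ k * (u - \<theta>))) has_contour_integral (if k = 0 then 2 * pi * \<i> else 0)) (circlepath 0 R)"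
proof (induction k)
  case 0
  have "((\<lambda>u. (\<lambda>_. (1::complex)) u / (u - \<theta>)) has_contour_integral (2 * of_real pi * \<i> * 1)) (circlepath 0 R)"
    by (rule Cauchy_integral_circlepath) (use assms in auto)
  then show ?case by simp
next
  case (Suc k)
  have h: "((\<lambda>u. (1/\<theta>) * (1 / (u ^ k * (u - \<theta>)) - 1 / u ^ Suc k)) has_contour_integral
      ((1/\<theta>) * ((if k = 0 then 2 * pi * \<i> else 0) - (if k = 0 then 2 * pi * \<i> else 0)))) (circlepath 0 R)"
    by (intro has_contour_integral_lmul has_contour_integral_diff Suc J assms)
  show ?case
  proof (rule has_contour_integral_eq[OF _ ])
    show "((\<lambda>u. (1/\<theta>) * (1 / (u ^ k * (u - \<theta>)) - 1 / u ^ Suc k)) has_contour_integral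
      (if Suc k = 0 then 2 * pi * \<i> else 0)) (circlepath 0 R)" using h by simp
  next
    fix u assume "u \<in> path_image (circlepath 0 R)"
    then have u: "norm u = R" using assms by (simp add: path_image_circlepath)
    then have "u \<noteq> 0" "u \<noteq> \<theta>" using assms by auto
    then show "(1/\<theta>) * (1 / (u ^ k * (u - \<theta>)) - 1 / u ^ Suc k) = 1 / (u ^ Suc k * (u - \<theta>))"
      using assms by (simp add: field_simps)
  qed
qed

lemma C: assumes "norm \<theta> < R"
  shows "((\<lambda>u. u ^ p / (u - \<theta>)) has_contour_integral (2 * pi * \<i> * \<theta> ^ p)) (circlepath 0 R)"
proof -
  have "((\<lambda>u. (\<lambda>u. u ^ p) u / (u - \<theta>)) has_contour_integral (2 * of_real pi * \<i> * (\<lambda>u. u ^ p) \<theta>)) (circlepath 0 R)"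
    by (rule Cauchy_integral_circlepath) (use assms in \<open>auto intro!: continuous_intros holomorphic_intros\<close>)
  then show ?thesis by simp
qed

lemma poch_expand: assumes "(u::'a::field) \<noteq> 0"
  shows "pochhammer (u + 1) n = (\<Sum>j\<le>n. of_nat (stirling (Suc n) (Suc j)) * u ^ j)"
proof -
  have "u * pochhammer (u + 1) n = pochhammer u (Suc n)" by (simp add: pochhammer_rec)
  also have "\<dots> = (\<Sum>k\<le>Suc n. of_nat (stirling (Suc n) k) * u ^ k)" by (simp add: stirling_pochhammer)
  also have "\<dots> = u * (\<Sum>j\<le>n. of_nat (stirling (Suc n) (Suc j)) * u ^ j)"
    by (subst sum.atMost_Suc_shift) (simp add: sum_distrib_left algebra_simps)
  finally show ?thesis using assms by simp
qed

lemma real_id: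
  fixes \<theta> :: real assumes "\<theta> > 0" "m \<le> n"
  shows "S' (n + 1) (m + 1) \<theta> = \<theta> ^ m / pochhammer (\<theta> + 1) n *
     (\<Sum>j\<le>n. real (stirling (Suc n) (Suc j)) * (if m \<le> j then \<theta> ^ (j - m) else 0))"
proof -
  have p: "pochhammer \<theta> (n+1) = \<theta> * pochhammer (\<theta> + 1) n" by (simp add: pochhammer_rec)
  have pp: "pochhammer (\<theta> + 1) n > 0" using assms by (intro pochhammer_pos) auto
  have "(\<Sum>k=m+1..n+1. (-1) ^ (n + 1 - k) * of_int (stirling1_signed (n+1) k) * \<theta> ^ k)
      = (\<Sum>k=m+1..n+1. real (stirling (n+1) k) * \<theta> ^ k)"
    by (intro sum.cong) (auto simp: stirling1_signed_def power_mult_distrib[symmetric] simp flip: power_add mult.assoc)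
  also have "\<dots> = (\<Sum>j=m..n. real (stirling (Suc n) (Suc j)) * \<theta> ^ Suc j)"
    by (subst sum.shift_bounds_cl_Suc_ivl[symmetric]) simp
  also have "\<dots> = \<theta> * \<theta> ^ m * (\<Sum>j\<le>n. real (stirling (Suc n) (Suc j)) * (if m \<le> j then \<theta> ^ (j - m) else 0))"
  proof -
    have "(\<Sum>j\<le>n. real (stirling (Suc n) (Suc j)) * (if m \<le> j then \<theta> ^ (j - m) else 0))
        = (\<Sum>j=m..n. real (stirling (Suc n) (Suc j)) * \<theta> ^ (j - m))"
      by (rule sum.mono_neutral_cong_right) auto
    moreover have "(\<Sum>j=m..n. real (stirling (Suc n) (Suc j)) * \<theta> ^ Suc j)
        = \<theta> * \<theta> ^ m * (\<Sum>j=m..n. real (stirling (Suc n) (Suc j)) * \<theta> ^ (j - m))"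
      by (simp add: sum_distrib_left, intro sum.cong) (auto simp: algebra_simps simp flip: power_add)
    ultimately show ?thesis by simp
  qed
  finally show ?thesis unfolding S'_def p using assms pp by (simp add: field_simps)
qed

theorem theorem1:
  fixes n m :: nat and \<theta> R :: real
  assumes "n \<ge> 1" and "m \<le> n" and "\<theta> > 0" and "R > \<theta>"
  shows "complex_of_real (S' (n + 1) (m + 1) \<theta>) =
    complex_of_real (\<theta> ^ m / pochhammer (\<theta> + 1) n) *
    (1 / (2 * pi * \<i>)) *
    contour_integral (circlepath 0 R)
      (\<lambda>z. pochhammer (z + 1) n / z ^ m / (z - complex_of_real \<theta>))"
proof -
  define T where "T = complex_of_real \<theta>"
  have R: "R > 0" "norm T < R" "T \<noteq> 0" using assms by (auto simp: T_def)
  define c where "c j = (of_nat (stirling (Suc n) (Suc j)) :: complex)" for j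
  define g where "g j u = (if m \<le> j then u ^ (j - m) / (u - T) else 1 / (u ^ (m - j) * (u - T)))" for j u
  define v where "v j = (if m \<le> j then 2 * pi * \<i> * T ^ (j - m) else 0)" for j
  have gi: "(g j has_contour_integral v j) (circlepath 0 R)" for j
  proof (cases "m \<le> j")
    case True
    then show ?thesis unfolding g_def v_def using C[OF R(2), of "j - m"] by simp
  next
    case False
    then show ?thesis unfolding g_def v_def using I[OF R, of "m - j"] by simp
  qed
  have hs: "((\<lambda>u. \<Sum>j\<le>n. c j * g j u) has_contour_integral (\<Sum>j\<le>n. c j * v j)) (circlepath 0 R)"
    by (intro has_contour_integral_sum has_contour_integral_lmul gi) auto
  have "((\<lambda>z. pochhammer (z + 1) n / z ^ m / (z - T)) has_contour_integral (\<Sum>j\<le>n. c j * v j)) (circlepath 0 R)"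
  proof (rule has_contour_integral_eq[OF hs])
    fix u assume "u \<in> path_image (circlepath 0 R)"
    then have u: "norm u = R" using R by (simp add: path_image_circlepath)
    then have u0: "u \<noteq> 0" "u \<noteq> T" using R by auto
    have "pochhammer (u + 1) n / u ^ m / (u - T) = (\<Sum>j\<le>n. c j * u ^ j) / u ^ m / (u - T)"
      using poch_expand[OF u0(1)] by (simp add: c_def)
    also have "\<dots> = (\<Sum>j\<le>n. c j * (u ^ j / u ^ m / (u - T)))"
      by (simp add: sum_divide_distrib)
    also have "\<dots> = (\<Sum>j\<le>n. c j * g j u)"
    proof (intro sum.cong refl)
      fix j
      show "c j * (u ^ j / u ^ m / (u - T)) = c j * g j u"
      proof (cases "m \<le> j")
        case True
        then have "u ^ j = u ^ m * u ^ (j - m)" by (simp flip: power_add)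
        then show ?thesis using True u0 by (simp add: g_def)
      next
        case False
        then have "u ^ m = u ^ j * u ^ (m - j)" by (simp flip: power_add)
        then show ?thesis using False u0 by (simp add: g_def field_simps)
      qed
    qed
    finally show "(\<Sum>j\<le>n. c j * g j u) = pochhammer (u + 1) n / u ^ m / (u - T)" by simp
  qed
  then have ci: "contour_integral (circlepath 0 R) (\<lambda>z. pochhammer (z + 1) n / z ^ m / (z - T))
      = 2 * pi * \<i> * complex_of_real (\<Sum>j\<le>n. real (stirling (Suc n) (Suc j)) * (if m \<le> j then \<theta> ^ (j - m) else 0))"
    by (auto dest!: contour_integral_unique simp: c_def v_def T_def sum_distrib_left intro!: sum.cong)
  show ?thesis
    unfolding T_def[symmetric] ci real_id[OF assms(3) assms(2)] by simp
qed
end
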